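(* Let $(X,d,f)$ be a TDS, $\mu\in\mathcal M(X)$, $K\subset X$ a Borel set, $\alpha\ge0$, and $\varphi\in C(X,\mathbb R)$ with $\varphi>0$. For each $s\in(0,\infty)$: (1) if $P^\alpha_\mu(f,x,\varphi)\le s$ for all $x\in K$, then $\dim^\alpha_{BS}(f,K,\varphi)\le s$; (2) if $P^\alpha_\mu(f,x,\varphi)\ge s$ for all $x\in K$ and $\mu(K)>0$, then $\dim^\alpha_{BS}(f,K,\varphi)\ge s$.
   Context: A TDS $(X,d,f)$: compact metric space and continuous $f$; $\mathcal M(X)$ is the set of Borel probability measures on $X$. $S_n\varphi(x)=\sum_{j=0}^{n-1}\varphi(f^jx)$; $d_n^\alpha(x,y)=\max_{0\le i\le n-1}e^{\alpha i}d(f^ix,f^iy)$; $B_n^\alpha(x,\varepsilon)=\{y:d_n^\alpha(x,y)<\varepsilon\}$. $\alpha$-BS dimension: $M^\alpha(K,s,\varepsilon,n,\varphi)=\inf\sum_i\exp\big(-s\sup_{y\in B^\alpha_{n_i}(x_i,\varepsilon)}S_{n_i}\varphi(y)\big)$ over finite or countable families $\{B^\alpha_{n_i}(x_i,\varepsilon)\}$, $x_i\in X$, $n_i\ge n$, covering $K$; $M^\alpha(K,s,\varepsilon,\varphi)=\lim_n M^\alpha(K,s,\varepsilon,n,\varphi)$; $M^\alpha(K,\varepsilon,\varphi)=\inf\{s:M^\alpha(K,s,\varepsilon,\varphi)=0\}=\sup\{s:M^\alpha(K,s,\varepsilon,\varphi)=\infty\}$; $\dim^\alpha_{BS}(f,K,\varphi)=\lim_{\varepsilon\to0}M^\alpha(K,\varepsilon,\varphi)$.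 Pointwise $\alpha$-local Brin–Katok entropy: $P^\alpha_\mu(f,x,\varphi)=\lim_{\varepsilon\to0}\liminf_{n\to\infty}\frac{-\log\mu(B_n^\alpha(x,\varepsilon))}{S_n\varphi(x)}$. *)

theory Defs
  imports "HOL-Probability.Probability"
begin

definition dn_alpha :: "('a::metric_space \<Rightarrow> 'a) \<Rightarrow> real \<Rightarrow> nat \<Rightarrow> 'a \<Rightarrow> 'a \<Rightarrow> real" where
  "dn_alpha f \<alpha> n x y = (MAX i\<in>{..<n}. exp (\<alpha> * real i) * dist ((f ^^ i) x) ((f ^^ i) y))"

definition bowen_ball :: "'a::metric_space set \<Rightarrow> ('a \<Rightarrow> 'a) \<Rightarrow> real \<Rightarrow> nat \<Rightarrow> 'a \<Rightarrow> real \<Rightarrow> 'a set" where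
  "bowen_ball X f \<alpha> n x \<epsilon> = {y \<in> X. dn_alpha f \<alpha> n x y < \<epsilon>}"

definition birkhoff :: "('a \<Rightarrow> 'a) \<Rightarrow> ('a \<Rightarrow> real) \<Rightarrow> nat \<Rightarrow> 'a \<Rightarrow> real" where
  "birkhoff f \<phi> n x = (\<Sum>j<n. \<phi> ((f ^^ j) x))"

text \<open>M^alpha(K,s,eps,n,phi): infimum over finite or countable families of Bowen balls
  (indexed by a subset I of nat, centres c i in X, lengths m i >= n) covering K.\<close>
definition M_n :: "'a::metric_space set \<Rightarrow> ('a \<Rightarrow> 'a) \<Rightarrow> real \<Rightarrow> 'a set \<Rightarrow> real \<Rightarrow> real \<Rightarrow> nat
    \<Rightarrow> ('a \<Rightarrow> real) \<Rightarrow> ennreal" where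
  "M_n X f \<alpha> K s \<epsilon> n \<phi> =
    (INF F \<in> {(I, c, m) | (I::nat set) (c::nat \<Rightarrow> 'a) (m::nat \<Rightarrow> nat).
                 (\<forall>i\<in>I. c i \<in> X \<and> n \<le> m i) \<and> K \<subseteq> (\<Union>i\<in>I. bowen_ball X f \<alpha> (m i) (c i) \<epsilon>)}.
       (case F of (I, c, m) \<Rightarrow>
          \<integral>\<^sup>+ i. ennreal (exp (- s * (SUP y\<in>bowen_ball X f \<alpha> (m i) (c i) \<epsilon>. birkhoff f \<phi> (m i) y)))
            \<partial>count_space I))"

definition M_s :: "'a::metric_space set \<Rightarrow> ('a \<Rightarrow> 'a) \<Rightarrow> real \<Rightarrow> 'a set \<Rightarrow> real \<Rightarrow> real
    \<Rightarrow> ('a \<Rightarrow> real) \<Rightarrow> ennreal" where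
  "M_s X f \<alpha> K s \<epsilon> \<phi> = lim (\<lambda>n. M_n X f \<alpha> K s \<epsilon> n \<phi>)"

definition M_crit :: "'a::metric_space set \<Rightarrow> ('a \<Rightarrow> 'a) \<Rightarrow> real \<Rightarrow> 'a set \<Rightarrow> real
    \<Rightarrow> ('a \<Rightarrow> real) \<Rightarrow> ereal" where
  "M_crit X f \<alpha> K \<epsilon> \<phi> = Inf {ereal s | s. M_s X f \<alpha> K s \<epsilon> \<phi> = 0}"

definition dim_BS :: "'a::metric_space set \<Rightarrow> ('a \<Rightarrow> 'a) \<Rightarrow> real \<Rightarrow> 'a set \<Rightarrow> ('a \<Rightarrow> real) \<Rightarrow> ereal" where
  "dim_BS X f \<alpha> K \<phi> = Lim (at_right 0) (\<lambda>\<epsilon>. M_crit X f \<alpha> K \<epsilon> \<phi>)"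

text \<open>Pointwise alpha-local Brin-Katok entropy; -log 0 is read as +infinity.\<close>
definition local_BK :: "'a::metric_space set \<Rightarrow> ('a \<Rightarrow> 'a) \<Rightarrow> 'a measure \<Rightarrow> real \<Rightarrow> ('a \<Rightarrow> real)
    \<Rightarrow> 'a \<Rightarrow> ereal" where
  "local_BK X f \<mu> \<alpha> \<phi> x = Lim (at_right 0) (\<lambda>\<epsilon>.
     liminf (\<lambda>n. if measure \<mu> (bowen_ball X f \<alpha> n x \<epsilon>) = 0 then \<infinity>
                 else ereal (- ln (measure \<mu> (bowen_ball X f \<alpha> n x \<epsilon>)) / birkhoff f \<phi> n x)))"

end

theory Submission
  imports Defs
begin

lemma orbit_in:
  assumes "f ` X \<subseteq> X" "x \<in> X" shows "(f ^^ i) x \<in> X"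
  using assms by (induction i) auto

lemma cont_iter:
  assumes "continuous_on X f" "f ` X \<subseteq> X" shows "continuous_on X (f ^^ i)"
proof (induction i)
  case 0 then show ?case by (simp add: continuous_on_id)
next
  case (Suc i)
  have "continuous_on X (f \<circ> (f ^^ i))"
    by (rule continuous_on_compose[OF Suc]) (meson assms continuous_on_subset image_subsetI orbit_in)
  then show ?case by (simp add: comp_def)
qed

lemma ball_iff:
  assumes "n \<ge> 1"
  shows "y \<in> bowen_ball X f \<alpha> n x \<epsilon> \<longleftrightarrow>
     y \<in> X \<and> (\<forall>i<n. exp (\<alpha> * real i) * dist ((f ^^ i) x) ((f ^^ i) y) < \<epsilon>)"
proof -
  define g where "g i = exp (\<alpha> * real i) * dist ((f ^^ i) x) ((f ^^ i) y)" for i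
  have "0 \<in> {..<n}" using assms by simp
  then have ne: "g ` {..<n} \<noteq> {}" by blast
  have "Max (g ` {..<n}) < \<epsilon> \<longleftrightarrow> (\<forall>a\<in>g ` {..<n}. a < \<epsilon>)"
    by (rule Max_less_iff[OF _ ne]) simp
  also have "\<dots> \<longleftrightarrow> (\<forall>i<n. g i < \<epsilon>)" by blast
  finally have "Max (g ` {..<n}) < \<epsilon> \<longleftrightarrow> (\<forall>i<n. g i < \<epsilon>)" .
  then show ?thesis unfolding bowen_ball_def dn_alpha_def g_def by simp
qed

lemma ball_mono: "\<epsilon>1 \<le> \<epsilon>2 \<Longrightarrow> bowen_ball X f \<alpha> n x \<epsilon>1 \<subseteq> bowen_ball X f \<alpha> n x \<epsilon>2"
  unfolding bowen_ball_def by auto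

lemma ball_sub: "bowen_ball X f \<alpha> n x \<epsilon> \<subseteq> X"
  unfolding bowen_ball_def by auto

lemma ball_center:
  assumes "n \<ge> 1" "x \<in> X" "\<epsilon> > 0"
  shows "x \<in> bowen_ball X f \<alpha> n x \<epsilon>"
  using assms by (simp add: ball_iff)

lemma ball_dist:
  assumes "n \<ge> 1" "y \<in> bowen_ball X f \<alpha> n x \<epsilon>" "\<alpha> \<ge> 0" "i < n"
  shows "dist ((f ^^ i) x) ((f ^^ i) y) < \<epsilon>"
proof -
  have "exp (\<alpha> * real i) * dist ((f ^^ i) x) ((f ^^ i) y) < \<epsilon>"
    using assms ball_iff by blast
  moreover have "dist ((f ^^ i) x) ((f ^^ i) y) \<le> exp (\<alpha> * real i) * dist ((f ^^ i) x) ((f ^^ i) y)"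
  proof -
    have e: "1 \<le> exp (\<alpha> * real i)" using assms(3) by simp
    show ?thesis using mult_right_mono[OF e zero_le_dist] by simp
  qed
  ultimately show ?thesis by linarith
qed

lemma ball_meas:
  assumes "continuous_on X f" "f ` X \<subseteq> X" "sets \<mu> = sets (restrict_space borel X)"
  shows "bowen_ball X f \<alpha> n x \<epsilon> \<in> sets \<mu>"
proof -
  have sp: "space (restrict_space borel X) = X" by (simp add: space_restrict_space)
  show ?thesis
  proof (cases "n = 0")
    case True
    then have eq: "bowen_ball X f \<alpha> n x \<epsilon> = (if Max {} < \<epsilon> then X else {})"
      unfolding bowen_ball_def dn_alpha_def by auto
    have "X \<in> sets \<mu>" using sets.top[of "restrict_space borel X"] unfolding sp assms(3) .
    moreover have "{} \<in> sets \<mu>" by (rule sets.empty_sets)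
    ultimately show ?thesis unfolding eq by simp
  next
    case False
    have "bowen_ball X f \<alpha> n x \<epsilon> = {y \<in> space (restrict_space borel X).
        \<forall>i\<in>{..<n}. exp (\<alpha> * real i) * dist ((f ^^ i) x) ((f ^^ i) y) < \<epsilon>}"
      using False unfolding sp by (simp add: ball_iff set_eq_iff Ball_def lessThan_iff)
    also have "\<dots> \<in> sets (restrict_space borel X)"
    proof (rule sets.sets_Collect_finite_All)
      fix i assume "i \<in> {..<n}"
      have "continuous_on X (\<lambda>y. exp (\<alpha> * real i) * dist ((f ^^ i) x) ((f ^^ i) y))"
      proof -
        have "continuous_on X (\<lambda>y. dist ((f ^^ i) x) ((f ^^ i) y))"
          by (rule continuous_on_dist[OF continuous_on_const cont_iter[OF assms(1,2)]])
        then show ?thesis by (rule continuous_on_mult_left)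
      qed
      then have "(\<lambda>y. exp (\<alpha> * real i) * dist ((f ^^ i) x) ((f ^^ i) y)) \<in> borel_measurable (restrict_space borel X)"
        by (rule borel_measurable_continuous_on_restrict)
      then show "{y \<in> space (restrict_space borel X). exp (\<alpha> * real i) * dist ((f ^^ i) x) ((f ^^ i) y) < \<epsilon>} \<in> sets (restrict_space borel X)"
      proof -
        have "(\<lambda>y. exp (\<alpha> * real i) * dist ((f ^^ i) x) ((f ^^ i) y)) -` {..<\<epsilon>} \<inter> space (restrict_space borel X) \<in> sets (restrict_space borel X)"
          by (rule measurable_sets[OF \<open>_ \<in> borel_measurable _\<close>]) simp
        moreover have "(\<lambda>y. exp (\<alpha> * real i) * dist ((f ^^ i) x) ((f ^^ i) y)) -` {..<\<epsilon>} \<inter> space (restrict_space borel X)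
          = {y \<in> space (restrict_space borel X). exp (\<alpha> * real i) * dist ((f ^^ i) x) ((f ^^ i) y) < \<epsilon>}"
          by blast
        ultimately show ?thesis by simp
      qed
    qed simp
    finally show ?thesis using assms(3) by simp
  qed
qed



definition cov :: "'a::metric_space set \<Rightarrow> ('a \<Rightarrow> 'a) \<Rightarrow> real \<Rightarrow> 'a set \<Rightarrow> real \<Rightarrow> nat \<Rightarrow> (nat set \<times> (nat \<Rightarrow> 'a) \<times> (nat \<Rightarrow> nat)) set" where
  "cov X f \<alpha> K \<epsilon> n = {(I, c, m) | (I::nat set) (c::nat \<Rightarrow> 'a) (m::nat \<Rightarrow> nat).
                 (\<forall>i\<in>I. c i \<in> X \<and> n \<le> m i) \<and> K \<subseteq> (\<Union>i\<in>I. bowen_ball X f \<alpha> (m i) (c i) \<epsilon>)}"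

definition tm :: "'a::metric_space set \<Rightarrow> ('a \<Rightarrow> 'a) \<Rightarrow> real \<Rightarrow> real \<Rightarrow> real \<Rightarrow> ('a \<Rightarrow> real) \<Rightarrow> (nat set \<times> (nat \<Rightarrow> 'a) \<times> (nat \<Rightarrow> nat)) \<Rightarrow> ennreal" where
  "tm X f \<alpha> s \<epsilon> \<phi> F = (case F of (I, c, m) \<Rightarrow>
          \<integral>\<^sup>+ i. ennreal (exp (- s * (SUP y\<in>bowen_ball X f \<alpha> (m i) (c i) \<epsilon>. birkhoff f \<phi> (m i) y)))
            \<partial>count_space I)"

lemma M_n_eq: "M_n X f \<alpha> K s \<epsilon> n \<phi> = (INF F\<in>cov X f \<alpha> K \<epsilon> n. tm X f \<alpha> s \<epsilon> \<phi> F)"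
  unfolding M_n_def cov_def tm_def by (rule refl)

lemma cov_iff: "(I, c, m) \<in> cov X f \<alpha> K \<epsilon> n \<longleftrightarrow>
   (\<forall>i\<in>I. c i \<in> X \<and> n \<le> m i) \<and> K \<subseteq> (\<Union>i\<in>I. bowen_ball X f \<alpha> (m i) (c i) \<epsilon>)"
  unfolding cov_def by blast

lemma M_n_le: "(I, c, m) \<in> cov X f \<alpha> K \<epsilon> n \<Longrightarrow> M_n X f \<alpha> K s \<epsilon> n \<phi> \<le> tm X f \<alpha> s \<epsilon> \<phi> (I, c, m)"
  unfolding M_n_eq by (rule INF_lower)

lemma M_n_incseq: "incseq (\<lambda>n. M_n X f \<alpha> K s \<epsilon> n \<phi>)"
proof (rule incseq_SucI)
  fix n
  have "cov X f \<alpha> K \<epsilon> (Suc n) \<subseteq> cov X f \<alpha> K \<epsilon> n"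
    unfolding cov_def by fastforce
  then show "M_n X f \<alpha> K s \<epsilon> n \<phi> \<le> M_n X f \<alpha> K s \<epsilon> (Suc n) \<phi>"
    unfolding M_n_eq by (rule INF_superset_mono) auto
qed

lemma M_s_SUP: "M_s X f \<alpha> K s \<epsilon> \<phi> = (SUP n. M_n X f \<alpha> K s \<epsilon> (Suc n) \<phi>)"
proof -
  have inc: "incseq (\<lambda>n. M_n X f \<alpha> K s \<epsilon> (Suc n) \<phi>)"
    using M_n_incseq unfolding incseq_def by (meson Suc_le_mono)
  have "(\<lambda>n. M_n X f \<alpha> K s \<epsilon> (Suc n) \<phi>) \<longlonglongrightarrow> (SUP n. M_n X f \<alpha> K s \<epsilon> (Suc n) \<phi>)"
    by (rule LIMSEQ_SUP[OF inc])
  then have "(\<lambda>n. M_n X f \<alpha> K s \<epsilon> n \<phi>) \<longlonglongrightarrow> (SUP n. M_n X f \<alpha> K s \<epsilon> (Suc n) \<phi>)"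
    by (rule LIMSEQ_imp_Suc)
  then show ?thesis unfolding M_s_def by (rule limI)
qed

lemma Lim_antimono:
  fixes g :: "real \<Rightarrow> ereal"
  assumes "\<And>a b. 0 < a \<Longrightarrow> a \<le> b \<Longrightarrow> g b \<le> g a"
  shows "Lim (at_right 0) g = (SUP e\<in>{0<..}. g e)"
proof -
  have "(g \<longlongrightarrow> (SUP e\<in>{0<..}. g e)) (at_right 0)"
  proof (rule increasing_tendsto)
    show "\<forall>\<^sub>F e in at_right 0. g e \<le> (SUP e\<in>{0<..}. g e)"
      unfolding eventually_at_right_field
      by (intro exI[of _ 1]) (auto intro: SUP_upper)
  next
    fix x assume "x < (SUP e\<in>{0<..}. g e)"
    then obtain e0 where e0: "e0 > 0" "x < g e0" by (auto simp: less_SUP_iff)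
    show "\<forall>\<^sub>F e in at_right 0. x < g e"
      unfolding eventually_at_right_field
      using e0 assms by (intro exI[of _ e0]) (auto intro: less_le_trans)
  qed
  then show ?thesis by (intro tendsto_Lim) auto
qed

lemma birk_lower:
  assumes "f ` X \<subseteq> X" "x \<in> X" "\<forall>y\<in>X. c \<le> \<phi> y"
  shows "real n * c \<le> birkhoff f \<phi> n x"
proof -
  have "(\<Sum>j<n. c) \<le> (\<Sum>j<n. \<phi> ((f ^^ j) x))"
  proof (rule sum_mono)
    fix j assume "j \<in> {..<n}"
    have "(f ^^ j) x \<in> X" by (rule orbit_in[OF assms(1,2)])
    then show "c \<le> \<phi> ((f ^^ j) x)" using assms(3) by blast
  qed
  then show ?thesis unfolding birkhoff_def by simp
qed

lemma birk_upper:
  assumes "f ` X \<subseteq> X" "x \<in> X" "\<forall>y\<in>X. \<phi> y \<le> C"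
  shows "birkhoff f \<phi> n x \<le> real n * C"
proof -
  have "(\<Sum>j<n. \<phi> ((f ^^ j) x)) \<le> (\<Sum>j<n. C)"
  proof (rule sum_mono)
    fix j assume "j \<in> {..<n}"
    have "(f ^^ j) x \<in> X" by (rule orbit_in[OF assms(1,2)])
    then show "\<phi> ((f ^^ j) x) \<le> C" using assms(3) by blast
  qed
  then show ?thesis unfolding birkhoff_def by simp
qed

lemma sup_bdd:
  assumes "f ` X \<subseteq> X" "\<forall>y\<in>X. \<phi> y \<le> C"
  shows "bdd_above (birkhoff f \<phi> m ` bowen_ball X f \<alpha> m x \<epsilon>)"
proof (rule bdd_aboveI[of _ "real m * C"])
  fix z assume "z \<in> birkhoff f \<phi> m ` bowen_ball X f \<alpha> m x \<epsilon>"
  then obtain y where y: "y \<in> bowen_ball X f \<alpha> m x \<epsilon>" "z = birkhoff f \<phi> m y" by blast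
  have "y \<in> X" using y(1) ball_sub by blast
  then show "z \<le> real m * C" using birk_upper[OF assms(1) _ assms(2)] y(2) by blast
qed

lemma sup_ge:
  assumes "f ` X \<subseteq> X" "\<forall>y\<in>X. \<phi> y \<le> C" "y \<in> bowen_ball X f \<alpha> m x \<epsilon>"
  shows "birkhoff f \<phi> m y \<le> (SUP y\<in>bowen_ball X f \<alpha> m x \<epsilon>. birkhoff f \<phi> m y)"
  by (rule cSUP_upper[OF assms(3) sup_bdd[OF assms(1,2)]])

lemma sup_le:
  assumes "m \<ge> 1" "x \<in> X" "\<epsilon> > 0" "\<And>y. y \<in> bowen_ball X f \<alpha> m x \<epsilon> \<Longrightarrow> birkhoff f \<phi> m y \<le> B"
  shows "(SUP y\<in>bowen_ball X f \<alpha> m x \<epsilon>. birkhoff f \<phi> m y) \<le> B"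
proof (rule cSUP_least)
  show "bowen_ball X f \<alpha> m x \<epsilon> \<noteq> {}" using ball_center[OF assms(1-3)] by blast
qed (rule assms(4))

lemma sup_lower:
  assumes "f ` X \<subseteq> X" "\<forall>y\<in>X. \<phi> y \<le> C" "\<forall>y\<in>X. c \<le> \<phi> y" "m \<ge> 1" "x \<in> X" "\<epsilon> > 0"
  shows "real m * c \<le> (SUP y\<in>bowen_ball X f \<alpha> m x \<epsilon>. birkhoff f \<phi> m y)"
proof -
  have "x \<in> bowen_ball X f \<alpha> m x \<epsilon>" by (rule ball_center[OF assms(4-6)])
  from sup_ge[OF assms(1,2) this] birk_lower[OF assms(1,5,3), of m] show ?thesis by linarith
qed



lemma cov_mono_eps:
  assumes "\<epsilon>1 \<le> \<epsilon>2" "(I, c, m) \<in> cov X f \<alpha> K \<epsilon>1 n"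
  shows "(I, c, m) \<in> cov X f \<alpha> K \<epsilon>2 n"
proof -
  have h: "(\<forall>i\<in>I. c i \<in> X \<and> n \<le> m i) \<and> K \<subseteq> (\<Union>i\<in>I. bowen_ball X f \<alpha> (m i) (c i) \<epsilon>1)"
    using assms(2) unfolding cov_iff .
  have "(\<Union>i\<in>I. bowen_ball X f \<alpha> (m i) (c i) \<epsilon>1) \<subseteq> (\<Union>i\<in>I. bowen_ball X f \<alpha> (m i) (c i) \<epsilon>2)"
    by (rule UN_mono[OF order_refl ball_mono[OF assms(1)]])
  then show ?thesis unfolding cov_iff using h by (meson order_trans)
qed

lemma tm_mono_eps:
  assumes "s \<ge> 0" "0 < \<epsilon>1" "\<epsilon>1 \<le> \<epsilon>2" "(I, c, m) \<in> cov X f \<alpha> K \<epsilon>1 n" "n \<ge> 1"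
    "f ` X \<subseteq> X" "\<forall>y\<in>X. \<phi> y \<le> C"
  shows "tm X f \<alpha> s \<epsilon>2 \<phi> (I, c, m) \<le> tm X f \<alpha> s \<epsilon>1 \<phi> (I, c, m)"
  unfolding tm_def prod.case
proof (rule nn_integral_mono)
  fix i assume "i \<in> space (count_space I)"
  then have i: "i \<in> I" by simp
  have h: "(\<forall>i\<in>I. c i \<in> X \<and> n \<le> m i)"
    using assms(4) unfolding cov_iff by (rule conjunct1)
  have ci: "c i \<in> X" "n \<le> m i" using h i by auto
  have "(SUP y\<in>bowen_ball X f \<alpha> (m i) (c i) \<epsilon>1. birkhoff f \<phi> (m i) y)
      \<le> (SUP y\<in>bowen_ball X f \<alpha> (m i) (c i) \<epsilon>2. birkhoff f \<phi> (m i) y)"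
  proof (rule cSUP_subset_mono)
    show "bowen_ball X f \<alpha> (m i) (c i) \<epsilon>1 \<noteq> {}"
      using ball_center[of "m i" "c i" X \<epsilon>1 f \<alpha>] ci assms(2,5) by auto
    show "bdd_above (birkhoff f \<phi> (m i) ` bowen_ball X f \<alpha> (m i) (c i) \<epsilon>2)"
      by (rule sup_bdd[OF assms(6,7)])
    show "bowen_ball X f \<alpha> (m i) (c i) \<epsilon>1 \<subseteq> bowen_ball X f \<alpha> (m i) (c i) \<epsilon>2"
      by (rule ball_mono[OF assms(3)])
  qed simp
  then have "- s * (SUP y\<in>bowen_ball X f \<alpha> (m i) (c i) \<epsilon>2. birkhoff f \<phi> (m i) y)
      \<le> - s * (SUP y\<in>bowen_ball X f \<alpha> (m i) (c i) \<epsilon>1. birkhoff f \<phi> (m i) y)"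
    using assms(1) by (simp add: mult_left_mono)
  then show "ennreal (exp (- s * (SUP y\<in>bowen_ball X f \<alpha> (m i) (c i) \<epsilon>2. birkhoff f \<phi> (m i) y)))
      \<le> ennreal (exp (- s * (SUP y\<in>bowen_ball X f \<alpha> (m i) (c i) \<epsilon>1. birkhoff f \<phi> (m i) y)))"
    by (intro ennreal_leI) simp
qed

lemma M_n_mono_eps:
  assumes "s \<ge> 0" "0 < \<epsilon>1" "\<epsilon>1 \<le> \<epsilon>2" "n \<ge> 1" "f ` X \<subseteq> X" "\<forall>y\<in>X. \<phi> y \<le> C"
  shows "M_n X f \<alpha> K s \<epsilon>2 n \<phi> \<le> M_n X f \<alpha> K s \<epsilon>1 n \<phi>"
  unfolding M_n_eq
proof (rule INF_mono)
  fix F assume F: "F \<in> cov X f \<alpha> K \<epsilon>1 n"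
  obtain I c m where Fe: "F = (I, c, m)" by (cases F) auto
  show "\<exists>G\<in>cov X f \<alpha> K \<epsilon>2 n. tm X f \<alpha> s \<epsilon>2 \<phi> G \<le> tm X f \<alpha> s \<epsilon>1 \<phi> F"
    using cov_mono_eps[OF assms(3)] tm_mono_eps[OF assms(1-3) _ assms(4-6)] F unfolding Fe by blast
qed

lemma M_n_ge1:
  assumes "K \<noteq> {}" "s \<le> 0" "n \<ge> 1" "f ` X \<subseteq> X" "\<forall>y\<in>X. \<phi> y \<le> C" "\<forall>y\<in>X. 0 \<le> \<phi> y" "\<epsilon> > 0"
  shows "1 \<le> M_n X f \<alpha> K s \<epsilon> n \<phi>"
  unfolding M_n_eq
proof (rule INF_greatest)
  fix F assume F: "F \<in> cov X f \<alpha> K \<epsilon> n"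
  obtain I c m where Fe: "F = (I, c, m)" by (cases F) auto
  have cv: "(\<forall>i\<in>I. c i \<in> X \<and> n \<le> m i) \<and> K \<subseteq> (\<Union>i\<in>I. bowen_ball X f \<alpha> (m i) (c i) \<epsilon>)"
    using F unfolding Fe cov_iff .
  obtain x where "x \<in> K" using assms(1) by blast
  then obtain i where i: "i \<in> I" using cv by blast
  have ci: "c i \<in> X" "n \<le> m i" using cv i by auto
  have "real (m i) * 0 \<le> (SUP y\<in>bowen_ball X f \<alpha> (m i) (c i) \<epsilon>. birkhoff f \<phi> (m i) y)"
    by (rule sup_lower[OF assms(4,5,6)]) (use ci assms(3,7) in auto)
  then have "0 \<le> - s * (SUP y\<in>bowen_ball X f \<alpha> (m i) (c i) \<epsilon>. birkhoff f \<phi> (m i) y)"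
    using assms(2) by (simp add: mult_nonpos_nonneg)
  then have "(1::ennreal) \<le> ennreal (exp (- s * (SUP y\<in>bowen_ball X f \<alpha> (m i) (c i) \<epsilon>. birkhoff f \<phi> (m i) y)))"
    by (simp add: ennreal_leI)
  also have "\<dots> \<le> tm X f \<alpha> s \<epsilon> \<phi> F"
    unfolding Fe tm_def prod.case by (rule nn_integral_ge_point[OF i])
  finally show "1 \<le> tm X f \<alpha> s \<epsilon> \<phi> F" .
qed

lemma M_n_empty: "M_n X f \<alpha> {} s \<epsilon> n \<phi> = 0"
proof -
  have "({}, c, m) \<in> cov X f \<alpha> {} \<epsilon> n" for c m unfolding cov_iff by simp
  then have "M_n X f \<alpha> {} s \<epsilon> n \<phi> \<le> tm X f \<alpha> s \<epsilon> \<phi> ({}, (\<lambda>_. undefined), (\<lambda>_. 0))"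
    by (rule M_n_le)
  also have "\<dots> = 0" unfolding tm_def by simp
  finally show ?thesis by simp
qed

lemma M_crit_mono:
  assumes "0 < \<epsilon>1" "\<epsilon>1 \<le> \<epsilon>2" "f ` X \<subseteq> X" "\<forall>y\<in>X. \<phi> y \<le> C" "\<forall>y\<in>X. 0 \<le> \<phi> y"
  shows "M_crit X f \<alpha> K \<epsilon>2 \<phi> \<le> M_crit X f \<alpha> K \<epsilon>1 \<phi>"
  unfolding M_crit_def
proof (rule Inf_superset_mono, rule subsetI)
  fix z assume "z \<in> {ereal s |s. M_s X f \<alpha> K s \<epsilon>1 \<phi> = 0}"
  then obtain s where z: "z = ereal s" and s0: "M_s X f \<alpha> K s \<epsilon>1 \<phi> = 0" by blast
  have "M_s X f \<alpha> K s \<epsilon>2 \<phi> = 0"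
  proof (cases "K = {}")
    case True
    then show ?thesis unfolding M_s_SUP by (simp add: M_n_empty)
  next
    case False
    have spos: "s > 0"
    proof (rule ccontr)
      assume "\<not> s > 0"
      then have "1 \<le> M_n X f \<alpha> K s \<epsilon>1 (Suc 0) \<phi>"
        by (intro M_n_ge1[OF False _ _ assms(3,4,5)]) (use assms(1) in auto)
      also have "\<dots> \<le> M_s X f \<alpha> K s \<epsilon>1 \<phi>" unfolding M_s_SUP by (rule SUP_upper) simp
      finally show False using s0 by simp
    qed
    have "M_s X f \<alpha> K s \<epsilon>2 \<phi> \<le> M_s X f \<alpha> K s \<epsilon>1 \<phi>"
      unfolding M_s_SUP
      by (intro SUP_mono) (metis M_n_mono_eps[OF _ assms(1,2) _ assms(3,4)] spos less_imp_le le_add1 plus_1_eq_Suc order_refl)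
    then show ?thesis using s0 by simp
  qed
  then show "z \<in> {ereal s |s. M_s X f \<alpha> K s \<epsilon>2 \<phi> = 0}" using z by blast
qed

lemma dim_BS_SUP:
  assumes "f ` X \<subseteq> X" "\<forall>y\<in>X. \<phi> y \<le> C" "\<forall>y\<in>X. 0 \<le> \<phi> y"
  shows "dim_BS X f \<alpha> K \<phi> = (SUP e\<in>{0<..}. M_crit X f \<alpha> K e \<phi>)"
  unfolding dim_BS_def by (rule Lim_antimono) (rule M_crit_mono[OF _ _ assms])


definition hBK :: "'a::metric_space set \<Rightarrow> ('a \<Rightarrow> 'a) \<Rightarrow> 'a measure \<Rightarrow> real \<Rightarrow> ('a \<Rightarrow> real) \<Rightarrow> 'a \<Rightarrow> real \<Rightarrow> ereal" where
  "hBK X f \<mu> \<alpha> \<phi> x \<epsilon> =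
     liminf (\<lambda>n. if measure \<mu> (bowen_ball X f \<alpha> n x \<epsilon>) = 0 then \<infinity>
                 else ereal (- ln (measure \<mu> (bowen_ball X f \<alpha> n x \<epsilon>)) / birkhoff f \<phi> n x))"

lemma local_BK_eq: "local_BK X f \<mu> \<alpha> \<phi> x = Lim (at_right 0) (hBK X f \<mu> \<alpha> \<phi> x)"
  unfolding local_BK_def hBK_def by (rule refl)

lemma hBK_mono:
  assumes "prob_space \<mu>" "sets \<mu> = sets (restrict_space borel X)" "continuous_on X f" "f ` X \<subseteq> X"
    "x \<in> X" "\<forall>y\<in>X. 0 \<le> \<phi> y" "\<epsilon>1 \<le> \<epsilon>2"
  shows "hBK X f \<mu> \<alpha> \<phi> x \<epsilon>2 \<le> hBK X f \<mu> \<alpha> \<phi> x \<epsilon>1"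
  unfolding hBK_def
proof (rule Liminf_mono, rule always_eventually, rule allI)
  fix n
  let ?B1 = "bowen_ball X f \<alpha> n x \<epsilon>1" and ?B2 = "bowen_ball X f \<alpha> n x \<epsilon>2"
  have le: "measure \<mu> ?B1 \<le> measure \<mu> ?B2"
    by (rule finite_measure.finite_measure_mono[OF prob_space.axioms(1)[OF assms(1)] ball_mono[OF assms(7)] ball_meas[OF assms(3,4,2)]])
  have bnn: "0 \<le> birkhoff f \<phi> n x" using birk_lower[OF assms(4,5,6), of n] by simp
  show "(if measure \<mu> ?B2 = 0 then \<infinity> else ereal (- ln (measure \<mu> ?B2) / birkhoff f \<phi> n x))
     \<le> (if measure \<mu> ?B1 = 0 then \<infinity> else ereal (- ln (measure \<mu> ?B1) / birkhoff f \<phi> n x))"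
  proof (cases "measure \<mu> ?B1 = 0")
    case True then show ?thesis by simp
  next
    case False
    then have p1: "0 < measure \<mu> ?B1" using measure_nonneg[of \<mu> ?B1] by linarith
    then have p2: "0 < measure \<mu> ?B2" using le by linarith
    have "ln (measure \<mu> ?B1) \<le> ln (measure \<mu> ?B2)" using p1 le by simp
    then have "- ln (measure \<mu> ?B2) / birkhoff f \<phi> n x \<le> - ln (measure \<mu> ?B1) / birkhoff f \<phi> n x"
      using bnn by (intro divide_right_mono) auto
    then show ?thesis using False p2 by simp
  qed
qed

lemma local_BK_SUP:
  assumes "prob_space \<mu>" "sets \<mu> = sets (restrict_space borel X)" "continuous_on X f" "f ` X \<subseteq> X"
    "x \<in> X" "\<forall>y\<in>X. 0 \<le> \<phi> y"
  shows "local_BK X f \<mu> \<alpha> \<phi> x = (SUP e\<in>{0<..}. hBK X f \<mu> \<alpha> \<phi> x e)"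
  unfolding local_BK_eq by (rule Lim_antimono) (rule hBK_mono[OF assms])


lemma birk_var:
  assumes "f ` X \<subseteq> X" "x \<in> X" "y \<in> X" "\<forall>j<m. dist ((f ^^ j) x) ((f ^^ j) y) < r"
    "\<forall>u\<in>X. \<forall>v\<in>X. dist u v < r \<longrightarrow> \<bar>\<phi> u - \<phi> v\<bar> \<le> \<eta>"
  shows "birkhoff f \<phi> m y \<le> birkhoff f \<phi> m x + real m * \<eta>"
proof -
  have "(\<Sum>j<m. \<phi> ((f ^^ j) y)) \<le> (\<Sum>j<m. \<phi> ((f ^^ j) x) + \<eta>)"
  proof (rule sum_mono)
    fix j assume "j \<in> {..<m}"
    then have d: "dist ((f ^^ j) x) ((f ^^ j) y) < r" using assms(4) by simp
    have u: "(f ^^ j) x \<in> X" by (rule orbit_in[OF assms(1,2)])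
    have v: "(f ^^ j) y \<in> X" by (rule orbit_in[OF assms(1,3)])
    have "\<bar>\<phi> ((f ^^ j) x) - \<phi> ((f ^^ j) y)\<bar> \<le> \<eta>" using assms(5) u v d by blast
    then show "\<phi> ((f ^^ j) y) \<le> \<phi> ((f ^^ j) x) + \<eta>" by linarith
  qed
  then show ?thesis unfolding birkhoff_def by (simp add: sum.distrib)
qed

lemma ball_tri:
  assumes "m \<ge> 1" "x \<in> bowen_ball X f \<alpha> m c \<epsilon>" "y \<in> bowen_ball X f \<alpha> m c \<epsilon>"
  shows "y \<in> bowen_ball X f \<alpha> m x (2 * \<epsilon>)"
proof -
  have hx: "\<forall>j<m. exp (\<alpha> * real j) * dist ((f ^^ j) c) ((f ^^ j) x) < \<epsilon>" and yX: "y \<in> X"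
    and hy: "\<forall>j<m. exp (\<alpha> * real j) * dist ((f ^^ j) c) ((f ^^ j) y) < \<epsilon>"
    using assms ball_iff by blast+
  have "exp (\<alpha> * real j) * dist ((f ^^ j) x) ((f ^^ j) y) < 2 * \<epsilon>" if j: "j < m" for j
  proof -
    have "dist ((f ^^ j) x) ((f ^^ j) y) \<le> dist ((f ^^ j) c) ((f ^^ j) x) + dist ((f ^^ j) c) ((f ^^ j) y)"
      by (rule dist_triangle3)
    then have "exp (\<alpha> * real j) * dist ((f ^^ j) x) ((f ^^ j) y) \<le>
       exp (\<alpha> * real j) * dist ((f ^^ j) c) ((f ^^ j) x) + exp (\<alpha> * real j) * dist ((f ^^ j) c) ((f ^^ j) y)"
      by (simp add: distrib_left[symmetric])
    then show ?thesis using hx hy j by fastforce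
  qed
  then show ?thesis using yX ball_iff[OF assms(1)] by blast
qed

lemma ball_tri_dist:
  assumes "m \<ge> 1" "x \<in> bowen_ball X f \<alpha> m c \<epsilon>" "y \<in> bowen_ball X f \<alpha> m c \<epsilon>" "\<alpha> \<ge> 0"
  shows "\<forall>j<m. dist ((f ^^ j) x) ((f ^^ j) y) < 2 * \<epsilon>"
  using ball_dist[OF assms(1) ball_tri[OF assms(1-3)] assms(4)] by blast

lemma emeasure_UN_count_le:
  fixes E :: "nat \<Rightarrow> 'b set"
  assumes "\<And>i. i \<in> I \<Longrightarrow> E i \<in> sets M"
  shows "emeasure M (\<Union>i\<in>I. E i) \<le> (\<integral>\<^sup>+ i. emeasure M (E i) \<partial>count_space I)"
proof -
  define F where "F i = (if i \<in> I then E i else {})" for i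
  have U: "(\<Union>i\<in>I. E i) = (\<Union>i. F i)" unfolding F_def by auto
  have "range F \<subseteq> sets M" unfolding F_def using assms by auto
  then have "emeasure M (\<Union>i. F i) \<le> (\<Sum>i. emeasure M (F i))" by (rule emeasure_subadditive_countably)
  also have "\<dots> = (\<integral>\<^sup>+ i. emeasure M (F i) \<partial>count_space UNIV)" by (rule nn_integral_count_space_nat[symmetric])
  also have "\<dots> = (\<integral>\<^sup>+ i. emeasure M (E i) * indicator I i \<partial>count_space UNIV)"
    unfolding F_def by (intro nn_integral_cong) (auto split: split_indicator)
  also have "\<dots> = (\<integral>\<^sup>+ i. emeasure M (E i) \<partial>count_space I)"
    by (rule nn_integral_count_space_indicator[symmetric]) simp
  finally show ?thesis unfolding U .
qed


lemma key2:
  assumes P: "prob_space \<mu>" and S: "sets \<mu> = sets (restrict_space borel X)"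
    and fc: "continuous_on X f" and fX: "f ` X \<subseteq> X" and al: "\<alpha> \<ge> 0"
    and cm: "cm > 0" "\<forall>y\<in>X. cm \<le> \<phi> y" and CC: "\<forall>y\<in>X. \<phi> y \<le> C"
    and t: "t > 0" and eta: "\<eta> \<ge> 0" and uc: "\<forall>u\<in>X. \<forall>v\<in>X. dist u v < 2 * \<epsilon> \<longrightarrow> \<bar>\<phi> u - \<phi> v\<bar> \<le> \<eta>"
    and ep: "\<epsilon> > 0" "2 * \<epsilon> \<le> r" and AK: "A \<subseteq> K" and KX: "K \<subseteq> X"
    and Ameas: "\<forall>x\<in>A. \<forall>n'\<ge>N. measure \<mu> (bowen_ball X f \<alpha> n' x r) \<le> exp (- t * birkhoff f \<phi> n' x)"
    and c0: "\<forall>B\<in>sets \<mu>. A \<subseteq> B \<longrightarrow> c0 \<le> measure \<mu> B"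
    and n: "n \<ge> N" "n \<ge> 1" and s2: "s2 \<le> t * (1 - \<eta> / cm)"
  shows "ennreal c0 \<le> M_n X f \<alpha> K s2 \<epsilon> n \<phi>"
  unfolding M_n_eq
proof (rule INF_greatest)
  fix F assume F: "F \<in> cov X f \<alpha> K \<epsilon> n"
  obtain I c m where Fe: "F = (I, c, m)" by (cases F) auto
  have cv: "(\<forall>i\<in>I. c i \<in> X \<and> n \<le> m i) \<and> K \<subseteq> (\<Union>i\<in>I. bowen_ball X f \<alpha> (m i) (c i) \<epsilon>)"
    using F unfolding Fe cov_iff .
  define B where "B i = bowen_ball X f \<alpha> (m i) (c i) \<epsilon>" for i
  define sp where "sp i = (SUP y\<in>B i. birkhoff f \<phi> (m i) y)" for i
  define E where "E i = (if B i \<inter> A \<noteq> {} then B i else {})" for i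
  have Bm: "B i \<in> sets \<mu>" for i unfolding B_def by (rule ball_meas[OF fc fX S])
  have Em: "E i \<in> sets \<mu>" for i unfolding E_def using Bm by simp
  have cover: "A \<subseteq> (\<Union>i\<in>I. E i)"
  proof
    fix x assume xA: "x \<in> A"
    then have "x \<in> K" using AK by blast
    then obtain i where i: "i \<in> I" "x \<in> B i" using cv unfolding B_def by blast
    then have "E i = B i" unfolding E_def using xA by auto
    then show "x \<in> (\<Union>i\<in>I. E i)" using i by blast
  qed
  have Um: "(\<Union>i\<in>I. E i) \<in> sets \<mu>"
    by (rule sets.countable_UN''[OF countableI_type]) (rule Em)
  have "c0 \<le> measure \<mu> (\<Union>i\<in>I. E i)" using c0 Um cover by blast
  then have "ennreal c0 \<le> emeasure \<mu> (\<Union>i\<in>I. E i)"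
    using finite_measure.emeasure_eq_measure[OF prob_space.axioms(1)[OF P]] by (simp add: ennreal_leI)
  also have "\<dots> \<le> (\<integral>\<^sup>+ i. emeasure \<mu> (E i) \<partial>count_space I)"
    by (rule emeasure_UN_count_le) (rule Em)
  also have "\<dots> \<le> (\<integral>\<^sup>+ i. ennreal (exp (- s2 * sp i)) \<partial>count_space I)"
  proof (rule nn_integral_mono)
    fix i assume "i \<in> space (count_space I)"
    then have i: "i \<in> I" by simp
    have ci: "c i \<in> X" "n \<le> m i" using cv i by auto
    have m1: "m i \<ge> 1" using ci n by linarith
    show "emeasure \<mu> (E i) \<le> ennreal (exp (- s2 * sp i))"
    proof (cases "B i \<inter> A = {}")
      case True
      then show ?thesis unfolding E_def by simp
    next
      case False
      then obtain x where x: "x \<in> B i" "x \<in> A" by blast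
      have xX: "x \<in> X" using x AK KX by blast
      have sub: "B i \<subseteq> bowen_ball X f \<alpha> (m i) x r"
      proof
        fix y assume "y \<in> B i"
        then have "y \<in> bowen_ball X f \<alpha> (m i) x (2 * \<epsilon>)"
          using ball_tri[OF m1] x(1) unfolding B_def by blast
        then show "y \<in> bowen_ball X f \<alpha> (m i) x r" using ball_mono[OF ep(2)] by blast
      qed
      have "measure \<mu> (B i) \<le> measure \<mu> (bowen_ball X f \<alpha> (m i) x r)"
        by (rule finite_measure.finite_measure_mono[OF prob_space.axioms(1)[OF P] sub ball_meas[OF fc fX S]])
      also have "\<dots> \<le> exp (- t * birkhoff f \<phi> (m i) x)"
        using Ameas x(2) ci n by auto
      also have "\<dots> \<le> exp (- s2 * sp i)"
      proof -
        have spl: "real (m i) * cm \<le> sp i"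
          unfolding sp_def B_def by (rule sup_lower[OF fX CC cm(2) m1 ci(1) ep(1)])
        have spu: "sp i \<le> birkhoff f \<phi> (m i) x + real (m i) * \<eta>"
          unfolding sp_def B_def
        proof (rule sup_le[OF m1 ci(1) ep(1)])
          fix y assume y: "y \<in> bowen_ball X f \<alpha> (m i) (c i) \<epsilon>"
          have yX: "y \<in> X" using y ball_sub by blast
          have "\<forall>j<m i. dist ((f ^^ j) x) ((f ^^ j) y) < 2 * \<epsilon>"
            by (rule ball_tri_dist[OF m1 _ y al]) (use x(1) B_def in simp)
          then show "birkhoff f \<phi> (m i) y \<le> birkhoff f \<phi> (m i) x + real (m i) * \<eta>"
            by (rule birk_var[OF fX xX yX _ uc])
        qed
        have "real (m i) * \<eta> \<le> sp i * \<eta> / cm"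
          using spl cm(1) eta by (simp add: field_simps mult_left_mono)
        then have "birkhoff f \<phi> (m i) x \<ge> sp i * (1 - \<eta> / cm)"
          using spu by (simp add: field_simps)
        then have "t * (sp i * (1 - \<eta> / cm)) \<le> t * birkhoff f \<phi> (m i) x"
          using t by (simp add: mult_left_mono)
        moreover have "s2 * sp i \<le> t * (1 - \<eta> / cm) * sp i"
          using s2 spl cm by (intro mult_right_mono) (auto intro: order_trans[OF _ spl])
        moreover have "t * (1 - \<eta> / cm) * sp i = t * (sp i * (1 - \<eta> / cm))" by simp
        ultimately have "- t * birkhoff f \<phi> (m i) x \<le> - s2 * sp i" by linarith
        then show ?thesis by simp
      qed
      finally have "measure \<mu> (B i) \<le> exp (- s2 * sp i)" .
      then show ?thesis unfolding E_def using False
        finite_measure.emeasure_eq_measure[OF prob_space.axioms(1)[OF P]] by (simp add: ennreal_leI)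
    qed
  qed
  also have "\<dots> = tm X f \<alpha> s2 \<epsilon> \<phi> F" unfolding Fe tm_def sp_def B_def by simp
  finally show "ennreal c0 \<le> tm X f \<alpha> s2 \<epsilon> \<phi> F" .
qed


lemma step_a:
  assumes P: "prob_space \<mu>" and S: "sets \<mu> = sets (restrict_space borel X)"
    and fc: "continuous_on X f" and fX: "f ` X \<subseteq> X"
    and cm: "cm > 0" "\<forall>y\<in>X. cm \<le> \<phi> y"
    and xX: "x \<in> X" and t: "ereal t < local_BK X f \<mu> \<alpha> \<phi> x"
  shows "\<exists>\<epsilon>>0. \<exists>N. \<forall>n\<ge>N. measure \<mu> (bowen_ball X f \<alpha> n x \<epsilon>) \<le> exp (- t * birkhoff f \<phi> n x)"
proof -
  have nn: "\<forall>y\<in>X. 0 \<le> \<phi> y" using cm by (meson less_le_trans less_imp_le)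
  have "ereal t < (SUP e\<in>{0<..}. hBK X f \<mu> \<alpha> \<phi> x e)"
    using t local_BK_SUP[OF P S fc fX xX nn] by simp
  then obtain e where e: "e > 0" "ereal t < hBK X f \<mu> \<alpha> \<phi> x e" by (auto simp: less_SUP_iff)
  from e(2) have "eventually (\<lambda>n. ereal t < (if measure \<mu> (bowen_ball X f \<alpha> n x e) = 0 then \<infinity>
                 else ereal (- ln (measure \<mu> (bowen_ball X f \<alpha> n x e)) / birkhoff f \<phi> n x))) sequentially"
    unfolding hBK_def by (rule less_LiminfD)
  then obtain N0 where N0: "\<And>n. n \<ge> N0 \<Longrightarrow> ereal t < (if measure \<mu> (bowen_ball X f \<alpha> n x e) = 0 then \<infinity>
                 else ereal (- ln (measure \<mu> (bowen_ball X f \<alpha> n x e)) / birkhoff f \<phi> n x))"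
    unfolding eventually_sequentially by blast
  have "\<forall>n\<ge>Suc N0. measure \<mu> (bowen_ball X f \<alpha> n x e) \<le> exp (- t * birkhoff f \<phi> n x)"
  proof (intro allI impI)
    fix n assume n: "Suc N0 \<le> n"
    let ?m = "measure \<mu> (bowen_ball X f \<alpha> n x e)"
    show "?m \<le> exp (- t * birkhoff f \<phi> n x)"
    proof (cases "?m = 0")
      case True then show ?thesis by simp
    next
      case False
      have "0 \<le> ?m" by simp
      then have mp: "?m > 0" using False by linarith
      have h: "t < (- ln ?m) / birkhoff f \<phi> n x" using N0[of n] n False by simp
      have Sp: "birkhoff f \<phi> n x > 0"
      proof -
        have "real n * cm \<le> birkhoff f \<phi> n x" by (rule birk_lower[OF fX xX cm(2)])
        moreover have "real n * cm > 0" using n cm(1) by simp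
        ultimately show ?thesis by linarith
      qed
      have "t * birkhoff f \<phi> n x < - ln ?m" by (metis pos_less_divide_eq[OF Sp] h)
      then have "ln ?m < - t * birkhoff f \<phi> n x" by simp
      then have "exp (ln ?m) < exp (- t * birkhoff f \<phi> n x)" by simp
      then show ?thesis using mp by simp
    qed
  qed
  then show ?thesis using e(1) by blast
qed

lemma null_contra:
  fixes A :: "nat \<Rightarrow> 'a set"
  assumes P: "prob_space \<mu>" and Km: "K \<in> sets \<mu>" and Kp: "measure \<mu> K > 0"
    and cov: "K \<subseteq> (\<Union>N. A N)"
  shows "\<exists>N c0. c0 > 0 \<and> (\<forall>B\<in>sets \<mu>. A N \<subseteq> B \<longrightarrow> c0 \<le> measure \<mu> B)"
proof (rule ccontr)
  assume "\<not> ?thesis"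
  then have h: "\<forall>N c0. c0 > 0 \<longrightarrow> (\<exists>B\<in>sets \<mu>. A N \<subseteq> B \<and> measure \<mu> B < c0)"
    by (meson not_le)
  have "\<forall>N k. \<exists>B. B \<in> sets \<mu> \<and> A N \<subseteq> B \<and> measure \<mu> B < inverse (real (Suc k))"
  proof (intro allI)
    fix N k
    have ik: "0 < inverse (real (Suc k))" by simp
    obtain B where "B \<in> sets \<mu>" "A N \<subseteq> B" "measure \<mu> B < inverse (real (Suc k))"
      using h[rule_format, OF ik] by blast
    then show "\<exists>B. B \<in> sets \<mu> \<and> A N \<subseteq> B \<and> measure \<mu> B < inverse (real (Suc k))" by blast
  qed
  then obtain G where G: "\<And>N k. G N k \<in> sets \<mu> \<and> A N \<subseteq> G N k \<and> measure \<mu> (G N k) < inverse (real (Suc k))"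
    by metis
  define D where "D N = (\<Inter>k. G N k)" for N
  have Dm: "D N \<in> sets \<mu>" for N
    unfolding D_def using G by (intro sets.countable_INT) auto
  have Dnull: "D N \<in> null_sets \<mu>" for N
  proof -
    have le: "measure \<mu> (D N) \<le> measure \<mu> (G N k)" for k
      by (rule finite_measure.finite_measure_mono[OF prob_space.axioms(1)[OF P]]) (use G D_def in auto)
    have "measure \<mu> (D N) \<le> 0"
    proof (rule ccontr)
      assume "\<not> measure \<mu> (D N) \<le> 0"
      then have "0 < measure \<mu> (D N)" by simp
      then obtain n where n: "n > 0" "inverse (real n) < measure \<mu> (D N)"
        using ex_inverse_of_nat_less by blast
      then have "Suc (n - 1) = n" by simp
      then show False using le[of "n - 1"] G[of N "n - 1"] n by simp
    qed
    then have "measure \<mu> (D N) = 0" using measure_nonneg[of \<mu> "D N"] by linarith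
    then have "emeasure \<mu> (D N) = 0"
      using finite_measure.emeasure_eq_measure[OF prob_space.axioms(1)[OF P]] by simp
    then show ?thesis using Dm[of N] by (simp add: null_sets_def)
  qed
  have U: "(\<Union>N. D N) \<in> null_sets \<mu>" by (intro null_sets_UN Dnull)
  have KU: "K \<subseteq> (\<Union>N. D N)"
  proof
    fix x assume "x \<in> K"
    then obtain N where "x \<in> A N" using cov by blast
    then have "x \<in> D N" unfolding D_def using G by (meson INT_I subsetD)
    then show "x \<in> (\<Union>N. D N)" by (rule UN_I[OF UNIV_I])
  qed
  have "K \<in> null_sets \<mu>" by (rule null_sets_subset[OF U Km KU])
  then have "measure \<mu> K = 0" by (simp add: measure_def null_setsD1)
  then show False using Kp by simp
qed


lemma consts_setup:
  fixes \<phi> :: "'a::topological_space \<Rightarrow> real"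
  assumes "compact X" "continuous_on X \<phi>" "\<forall>x\<in>X. \<phi> x > 0"
  shows "\<exists>cm C. cm > 0 \<and> (\<forall>y\<in>X. cm \<le> \<phi> y) \<and> (\<forall>y\<in>X. \<phi> y \<le> C)"
proof (cases "X = {}")
  case True
  have "(1::real) > 0 \<and> (\<forall>y\<in>X. 1 \<le> \<phi> y) \<and> (\<forall>y\<in>X. \<phi> y \<le> 0)" using True by simp
  then show ?thesis by blast
next
  case False
  obtain a where a: "a \<in> X" "\<forall>y\<in>X. \<phi> a \<le> \<phi> y"
    using continuous_attains_inf[OF assms(1) False assms(2)] by blast
  obtain b where b: "b \<in> X" "\<forall>y\<in>X. \<phi> y \<le> \<phi> b"
    using continuous_attains_sup[OF assms(1) False assms(2)] by blast
  have "\<phi> a > 0" using a(1) assms(3) by blast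
  then show ?thesis using a(2) b(2) by blast
qed

lemma K_sub_X:
  assumes "sets \<mu> = sets (restrict_space borel X)" "K \<in> sets \<mu>"
  shows "K \<subseteq> X"
proof -
  have "space \<mu> = space (restrict_space borel X)" by (rule sets_eq_imp_space_eq[OF assms(1)])
  then have "space \<mu> = X" by (simp add: space_restrict_space)
  then show ?thesis using sets.sets_into_space[OF assms(2)] by simp
qed

lemma part2:
  assumes cX: "compact X" and fc: "continuous_on X f" and fX: "f ` X \<subseteq> X"
    and P: "prob_space \<mu>" and S: "sets \<mu> = sets (restrict_space borel X)"
    and Km: "K \<in> sets \<mu>" and al: "\<alpha> \<ge> 0"
    and phic: "continuous_on X \<phi>" and phip: "\<forall>x\<in>X. \<phi> x > 0" and s: "s > 0"
    and BK: "\<forall>x\<in>K. local_BK X f \<mu> \<alpha> \<phi> x \<ge> ereal s" and Kp: "measure \<mu> K > 0"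
  shows "dim_BS X f \<alpha> K \<phi> \<ge> ereal s"
proof -
  obtain cm C where cm: "cm > 0" "\<forall>y\<in>X. cm \<le> \<phi> y" and CC: "\<forall>y\<in>X. \<phi> y \<le> C"
    using consts_setup[OF cX phic phip] by blast
  have nn: "\<forall>y\<in>X. 0 \<le> \<phi> y" using phip by (simp add: less_imp_le)
  have KX: "K \<subseteq> X" by (rule K_sub_X[OF S Km])
  have uc: "uniformly_continuous_on X \<phi>" by (rule compact_uniformly_continuous[OF phic cX])
  have dimeq: "dim_BS X f \<alpha> K \<phi> = (SUP e\<in>{0<..}. M_crit X f \<alpha> K e \<phi>)"
    by (rule dim_BS_SUP[OF fX CC nn])
  show ?thesis
  proof (rule dense_le_bounded[of "ereal 0"])
    show "ereal 0 < ereal s" using s by simp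
  next
    fix w assume w: "ereal 0 < w" "w < ereal s"
    then obtain wr where wr: "w = ereal wr" by (cases w) auto
    with w have wr0: "0 < wr" and wrs: "wr < s" by auto
    define \<delta> where "\<delta> = (s - wr) / 2"
    define t where "t = s - \<delta>"
    define \<eta> where "\<eta> = \<delta> * cm / t"
    have dp: "\<delta> > 0" unfolding \<delta>_def using wrs by simp
    have tp: "t > 0" unfolding t_def \<delta>_def using wr0 wrs by simp
    have ep: "\<eta> > 0" unfolding \<eta>_def using dp tp cm(1) by simp
    have tw: "t * (1 - \<eta> / cm) = wr"
    proof -
      have "\<eta> / cm = \<delta> / t" unfolding \<eta>_def using cm(1) by simp
      then have "t * (1 - \<eta> / cm) = t - \<delta>" using tp by (simp add: field_simps)
      also have "\<dots> = wr" unfolding t_def \<delta>_def by simp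
      finally show ?thesis .
    qed
    have a: "\<exists>\<epsilon>>0. \<exists>N. \<forall>n\<ge>N. measure \<mu> (bowen_ball X f \<alpha> n x \<epsilon>) \<le> exp (- t * birkhoff f \<phi> n x)"
      if x: "x \<in> K" for x
    proof (rule step_a[OF P S fc fX cm])
      show "x \<in> X" using x KX by blast
      have "ereal t < ereal s" unfolding t_def using dp by simp
      also have "\<dots> \<le> local_BK X f \<mu> \<alpha> \<phi> x" using BK x by blast
      finally show "ereal t < local_BK X f \<mu> \<alpha> \<phi> x" .
    qed
    define A where "A N = {x\<in>K. \<forall>n'\<ge>N. measure \<mu> (bowen_ball X f \<alpha> n' x (1 / real (Suc N)))
        \<le> exp (- t * birkhoff f \<phi> n' x)}" for N
    have cover: "K \<subseteq> (\<Union>N. A N)"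
    proof
      fix x assume x: "x \<in> K"
      obtain e N0 where e: "e > 0" "\<forall>n\<ge>N0. measure \<mu> (bowen_ball X f \<alpha> n x e) \<le> exp (- t * birkhoff f \<phi> n x)"
        using a[OF x] by blast
      obtain k where k: "1 / e < real k" using reals_Archimedean2 by blast
      define N where "N = max N0 k"
      have "1 / e < real (Suc N)" using k unfolding N_def by simp
      then have "1 < e * real (Suc N)" using e(1) by (simp add: field_simps)
      then have rN: "1 / real (Suc N) \<le> e" by (simp add: field_simps)
      have "\<forall>n'\<ge>N. measure \<mu> (bowen_ball X f \<alpha> n' x (1 / real (Suc N))) \<le> exp (- t * birkhoff f \<phi> n' x)"
      proof (intro allI impI)
        fix n' assume n': "N \<le> n'"
        have "measure \<mu> (bowen_ball X f \<alpha> n' x (1 / real (Suc N))) \<le> measure \<mu> (bowen_ball X f \<alpha> n' x e)"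
          by (rule finite_measure.finite_measure_mono[OF prob_space.axioms(1)[OF P] ball_mono[OF rN] ball_meas[OF fc fX S]])
        also have "\<dots> \<le> exp (- t * birkhoff f \<phi> n' x)" using e(2) n' unfolding N_def by simp
        finally show "measure \<mu> (bowen_ball X f \<alpha> n' x (1 / real (Suc N))) \<le> exp (- t * birkhoff f \<phi> n' x)" .
      qed
      then have "x \<in> A N" unfolding A_def using x by blast
      then show "x \<in> (\<Union>N. A N)" by (rule UN_I[OF UNIV_I])
    qed
    obtain N c0 where c0: "c0 > 0" "\<forall>B\<in>sets \<mu>. A N \<subseteq> B \<longrightarrow> c0 \<le> measure \<mu> B"
      using null_contra[OF P Km Kp cover] by blast
    obtain d where d: "d > 0" "\<forall>x\<in>X. \<forall>x'\<in>X. dist x' x < d \<longrightarrow> dist (\<phi> x') (\<phi> x) < \<eta>"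
      using uc ep unfolding uniformly_continuous_on_def by blast
    define \<epsilon> where "\<epsilon> = min (d / 2) (1 / (2 * real (Suc N)))"
    have eps: "\<epsilon> > 0" unfolding \<epsilon>_def using d(1) by simp
    have e2r: "2 * \<epsilon> \<le> 1 / real (Suc N)"
    proof -
      have "\<epsilon> \<le> 1 / (2 * real (Suc N))" unfolding \<epsilon>_def by simp
      then have "2 * \<epsilon> \<le> 2 * (1 / (2 * real (Suc N)))" by simp
      also have "\<dots> = 1 / real (Suc N)" by (simp add: field_simps)
      finally show ?thesis .
    qed
    have e2d: "2 * \<epsilon> \<le> d" unfolding \<epsilon>_def by simp
    have uc2: "\<forall>u\<in>X. \<forall>v\<in>X. dist u v < 2 * \<epsilon> \<longrightarrow> \<bar>\<phi> u - \<phi> v\<bar> \<le> \<eta>"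
    proof (intro ballI impI)
      fix u v assume uv: "u \<in> X" "v \<in> X" "dist u v < 2 * \<epsilon>"
      then have "dist (\<phi> u) (\<phi> v) < \<eta>" using d(2) e2d by auto
      then show "\<bar>\<phi> u - \<phi> v\<bar> \<le> \<eta>" by (simp add: dist_real_def)
    qed
    have AK: "A N \<subseteq> K" unfolding A_def by blast
    have Ameas: "\<forall>x\<in>A N. \<forall>n'\<ge>N. measure \<mu> (bowen_ball X f \<alpha> n' x (1 / real (Suc N))) \<le> exp (- t * birkhoff f \<phi> n' x)"
      unfolding A_def by blast
    have key: "ennreal c0 \<le> M_n X f \<alpha> K s2 \<epsilon> (Suc N) \<phi>" if s2: "s2 \<le> wr" for s2
      by (rule key2[OF P S fc fX al cm CC tp less_imp_le[OF ep] uc2 eps e2r AK KX Ameas c0(2)]) (use s2 tw in auto)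
    have "w \<le> M_crit X f \<alpha> K \<epsilon> \<phi>"
      unfolding M_crit_def
    proof (rule Inf_greatest)
      fix z assume "z \<in> {ereal s |s. M_s X f \<alpha> K s \<epsilon> \<phi> = 0}"
      then obtain s2 where z: "z = ereal s2" and s0: "M_s X f \<alpha> K s2 \<epsilon> \<phi> = 0" by blast
      show "w \<le> z"
      proof (rule ccontr)
        assume "\<not> w \<le> z"
        then have "s2 \<le> wr" using wr z by simp
        then have "ennreal c0 \<le> M_n X f \<alpha> K s2 \<epsilon> (Suc N) \<phi>" by (rule key)
        also have "\<dots> \<le> M_s X f \<alpha> K s2 \<epsilon> \<phi>" unfolding M_s_SUP by (rule SUP_upper) simp
        finally show False using s0 c0(1) by simp
      qed
    qed
    also have "\<dots> \<le> (SUP e\<in>{0<..}. M_crit X f \<alpha> K e \<phi>)" by (rule SUP_upper) (use eps in simp)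
    finally show "w \<le> dim_BS X f \<alpha> K \<phi>" unfolding dimeq .
  qed
qed


lemma finite_bound:
  assumes P: "prob_space \<mu>" and Fin: "finite F" and Bm: "\<forall>x\<in>F. Bl x \<in> sets \<mu>"
    and disj: "\<forall>y\<in>F. \<forall>y'\<in>F. y \<noteq> y' \<longrightarrow> Bl y \<inter> Bl y' = {}"
    and low: "\<forall>x\<in>F. c < measure \<mu> (Bl x)"
  shows "real (card F) * c \<le> 1"
proof -
  have df: "disjoint_family_on Bl F" unfolding disjoint_family_on_def using disj by blast
  have "measure \<mu> (\<Union>y\<in>F. Bl y) = (\<Sum>y\<in>F. measure \<mu> (Bl y))"
    by (rule finite_measure.finite_measure_finite_Union[OF prob_space.axioms(1)[OF P] Fin _ df])
       (use Bm in blast)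
  moreover have "(\<Sum>y\<in>F. c) \<le> (\<Sum>y\<in>F. measure \<mu> (Bl y))"
    by (rule sum_mono) (use low in \<open>simp add: less_imp_le\<close>)
  moreover have "measure \<mu> (\<Union>y\<in>F. Bl y) \<le> 1" by (rule prob_space.prob_le_1[OF P])
  ultimately show ?thesis by (simp add: mult.commute)
qed

lemma select:
  fixes Bl :: "'a \<Rightarrow> 'b set" and lev :: "'a \<Rightarrow> nat"
  assumes P: "prob_space \<mu>" and Bm: "\<forall>x\<in>K. Bl x \<in> sets \<mu>"
    and cst: "\<forall>k. cst k > (0::real)" and low: "\<forall>x\<in>K. cst (lev x) < measure \<mu> (Bl x)"
  shows "\<exists>Y\<subseteq>K. countable Y \<and> (\<forall>y\<in>Y. \<forall>y'\<in>Y. y \<noteq> y' \<longrightarrow> Bl y \<inter> Bl y' = {})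
     \<and> (\<forall>x\<in>K. \<exists>y\<in>Y. lev y \<le> lev x \<and> Bl x \<inter> Bl y \<noteq> {})"
proof -
  define good where "good G \<longleftrightarrow> (\<forall>y\<in>G. \<forall>y'\<in>G. y \<noteq> y' \<longrightarrow> Bl y \<inter> Bl y' = {})" for G
  define cand where "cand k A = {x\<in>K. lev x = k \<and> (\<forall>y\<in>A. Bl x \<inter> Bl y = {})}" for k A
  define ok where "ok k A F \<longleftrightarrow> F \<subseteq> cand k A \<and> finite F \<and> good F" for k A F
  define pick where "pick k A = (SOME F. ok k A F \<and> (\<forall>F'. ok k A F' \<longrightarrow> card F' \<le> card F))" for k A
  have pick: "ok k A (pick k A) \<and> (\<forall>F'. ok k A F' \<longrightarrow> card F' \<le> card (pick k A))" for k A
  proof -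
    have "\<exists>F. ok k A F \<and> (\<forall>F'. ok k A F' \<longrightarrow> card F' \<le> card F)"
    proof (rule ex_has_greatest_nat[where k="{}" and f=card and b="nat \<lceil>1 / cst k\<rceil> + 1"])
      show "ok k A {}" unfolding ok_def good_def by simp
      show "\<forall>F. ok k A F \<longrightarrow> card F < nat \<lceil>1 / cst k\<rceil> + 1"
      proof (intro allI impI)
        fix F assume "ok k A F"
        then have F: "F \<subseteq> cand k A" "finite F" "good F" unfolding ok_def by auto
        have FK: "F \<subseteq> K" using F(1) unfolding cand_def by blast
        have Flev: "\<forall>x\<in>F. lev x = k" using F(1) unfolding cand_def by blast
        have "real (card F) * cst k \<le> 1"
        proof (rule finite_bound[OF P F(2)])
          show "\<forall>x\<in>F. Bl x \<in> sets \<mu>" using Bm FK by blast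
          show "\<forall>y\<in>F. \<forall>y'\<in>F. y \<noteq> y' \<longrightarrow> Bl y \<inter> Bl y' = {}" using F(3) unfolding good_def .
          show "\<forall>x\<in>F. cst k < measure \<mu> (Bl x)" using low FK Flev by force
        qed
        then have "real (card F) \<le> 1 / cst k" using cst by (simp add: field_simps)
        then have "real (card F) \<le> real_of_int \<lceil>1 / cst k\<rceil>" by linarith
        then have "int (card F) \<le> \<lceil>1 / cst k\<rceil>" by linarith
        then have "card F \<le> nat \<lceil>1 / cst k\<rceil>" by linarith
        then show "card F < nat \<lceil>1 / cst k\<rceil> + 1" by linarith
      qed
    qed
    then show ?thesis unfolding pick_def by (rule someI_ex)
  qed
  define acc where "acc = rec_nat {} (\<lambda>k A. A \<union> pick k A)"
  have acc0: "acc 0 = {}" by (simp add: acc_def)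
  have accS: "acc (Suc k) = acc k \<union> pick k (acc k)" for k by (simp add: acc_def)
  have accK: "acc k \<subseteq> K \<and> finite (acc k) \<and> (\<forall>y\<in>acc k. lev y < k) \<and> good (acc k)" for k
  proof (induction k)
    case 0 show ?case by (simp add: acc0 good_def)
  next
    case (Suc k)
    let ?P = "pick k (acc k)"
    have okP: "?P \<subseteq> cand k (acc k)" "finite ?P" "good ?P" using pick[of k "acc k"] unfolding ok_def by auto
    have PK: "?P \<subseteq> K" using okP(1) unfolding cand_def by blast
    have Plev: "\<forall>y\<in>?P. lev y = k" using okP(1) unfolding cand_def by blast
    have Pdisj: "\<forall>p\<in>?P. \<forall>y\<in>acc k. Bl p \<inter> Bl y = {}" using okP(1) unfolding cand_def by blast
    have g: "good (acc k \<union> ?P)"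
      unfolding good_def
    proof (intro ballI impI)
      fix y y' assume y: "y \<in> acc k \<union> ?P" "y' \<in> acc k \<union> ?P" "y \<noteq> y'"
      show "Bl y \<inter> Bl y' = {}"
      proof (cases "y \<in> acc k")
        case True
        show ?thesis
        proof (cases "y' \<in> acc k")
          case True
          then show ?thesis using \<open>y \<in> acc k\<close> y(3) Suc.IH unfolding good_def by blast
        next
          case False
          then have "y' \<in> ?P" using y(2) by blast
          then have "Bl y' \<inter> Bl y = {}" using Pdisj \<open>y \<in> acc k\<close> by blast
          then show ?thesis by (simp add: Int_commute)
        qed
      next
        case False
        then have yP: "y \<in> ?P" using y(1) by blast
        show ?thesis
        proof (cases "y' \<in> acc k")
          case True
          then show ?thesis using Pdisj yP by blast
        next
          case False
          then have "y' \<in> ?P" using y(2) by blast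
          then show ?thesis using yP y(3) okP(3) unfolding good_def by blast
        qed
      qed
    qed
    have "\<forall>y\<in>acc k \<union> ?P. lev y < Suc k"
    proof
      fix y assume "y \<in> acc k \<union> ?P"
      then show "lev y < Suc k" using Suc.IH Plev by (metis Un_iff less_Suc_eq)
    qed
    then show ?case unfolding accS using Suc.IH okP(2) PK g by simp
  qed
  have Bne: "Bl x \<noteq> {}" if "x \<in> K" for x
  proof
    assume "Bl x = {}"
    then have "measure \<mu> (Bl x) = 0" by simp
    then show False using low cst that by (metis less_asym)
  qed
  have cover_k: "\<forall>x\<in>K. lev x < k \<longrightarrow> (\<exists>y\<in>acc k. lev y \<le> lev x \<and> Bl x \<inter> Bl y \<noteq> {})" for k
  proof (induction k)
    case 0 show ?case by simp
  next
    case (Suc k)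
    let ?P = "pick k (acc k)"
    have okP: "?P \<subseteq> cand k (acc k)" "finite ?P" "good ?P" using pick[of k "acc k"] unfolding ok_def by auto
    have Plev: "\<forall>y\<in>?P. lev y = k" using okP(1) unfolding cand_def by blast
    show ?case
    proof (intro ballI impI)
      fix x assume x: "x \<in> K" "lev x < Suc k"
      show "\<exists>y\<in>acc (Suc k). lev y \<le> lev x \<and> Bl x \<inter> Bl y \<noteq> {}"
      proof (cases "lev x < k")
        case True
        then obtain y where "y \<in> acc k" "lev y \<le> lev x" "Bl x \<inter> Bl y \<noteq> {}" using Suc.IH x(1) by blast
        then show ?thesis unfolding accS by blast
      next
        case False
        then have lx: "lev x = k" using x(2) by simp
        show ?thesis
        proof (cases "\<forall>y\<in>acc k. Bl x \<inter> Bl y = {}")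
          case False
          then obtain y where y: "y \<in> acc k" "Bl x \<inter> Bl y \<noteq> {}" by blast
          have "lev y < k" using accK[of k] y(1) by blast
          then have "lev y \<le> lev x" using lx by simp
          then show ?thesis using y unfolding accS by (intro bexI[of _ y]) auto
        next
          case True
          then have xc: "x \<in> cand k (acc k)" unfolding cand_def using x(1) lx by blast
          show ?thesis
          proof (cases "x \<in> ?P")
            case True
            have "Bl x \<inter> Bl x \<noteq> {}" using Bne[OF x(1)] by simp
            then show ?thesis using True unfolding accS by (intro bexI[of _ x]) auto
          next
            case False
            have ng: "\<not> good (insert x ?P)"
            proof
              assume g: "good (insert x ?P)"
              have "ok k (acc k) (insert x ?P)" unfolding ok_def using okP xc g by simp
              then have "card (insert x ?P) \<le> card ?P" using pick[of k "acc k"] by blast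
              moreover have "card (insert x ?P) = Suc (card ?P)" using okP(2) False by simp
              ultimately show False by simp
            qed
            obtain z where z: "z \<in> ?P" "Bl x \<inter> Bl z \<noteq> {}"
            proof -
              obtain y y' where yy: "y \<in> insert x ?P" "y' \<in> insert x ?P" "y \<noteq> y'" "Bl y \<inter> Bl y' \<noteq> {}"
                using ng unfolding good_def by blast
              show ?thesis
              proof (cases "y = x")
                case True
                then have y'P: "y' \<in> ?P" using yy by blast
                have "Bl x \<inter> Bl y' \<noteq> {}" using yy(4) True by simp
                then show ?thesis by (rule that[OF y'P])
              next
                case False
                then have yP: "y \<in> ?P" using yy by blast
                show ?thesis
                proof (cases "y' = x")
                  case True
                  have "Bl x \<inter> Bl y \<noteq> {}" using yy(4) True by (simp add: Int_commute)
                  then show ?thesis by (rule that[OF yP])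
                next
                  case False
                  then have "y' \<in> ?P" using yy by blast
                  then have "Bl y \<inter> Bl y' = {}" using yP yy(3) okP(3) unfolding good_def by blast
                  then have False using yy(4) by simp
                  then show ?thesis by simp
                qed
              qed
            qed
            have "lev z \<le> lev x" using Plev z(1) lx by simp
            then show ?thesis using z unfolding accS by (intro bexI[of _ z]) auto
          qed
        qed
      qed
    qed
  qed
  define Y where "Y = (\<Union>k. acc k)"
  have mono: "acc k \<subseteq> acc k'" if "k \<le> k'" for k k'
  proof -
    have "\<And>n. acc n \<subseteq> acc (Suc n)" by (simp add: accS)
    from lift_Suc_mono_le[of acc, OF this that] show ?thesis .
  qed
  show ?thesis
  proof (intro exI[of _ Y] conjI)
    show "Y \<subseteq> K" unfolding Y_def using accK by blast
    have ca: "countable (acc k)" for k using accK[of k] by (simp add: countable_finite)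
    show "countable Y" unfolding Y_def by (rule countable_UN[OF countableI_type ca])
    show "\<forall>y\<in>Y. \<forall>y'\<in>Y. y \<noteq> y' \<longrightarrow> Bl y \<inter> Bl y' = {}"
    proof (intro ballI impI)
      fix y y' assume y: "y \<in> Y" "y' \<in> Y" "y \<noteq> y'"
      obtain k1 k2 where k: "y \<in> acc k1" "y' \<in> acc k2" using y unfolding Y_def by blast
      have "y \<in> acc (max k1 k2)" using k(1) mono[of k1 "max k1 k2"] by auto
      moreover have "y' \<in> acc (max k1 k2)" using k(2) mono[of k2 "max k1 k2"] by auto
      ultimately show "Bl y \<inter> Bl y' = {}" using accK[of "max k1 k2"] y(3) unfolding good_def by blast
    qed
    show "\<forall>x\<in>K. \<exists>y\<in>Y. lev y \<le> lev x \<and> Bl x \<inter> Bl y \<noteq> {}"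
    proof
      fix x assume "x \<in> K"
      then obtain y where "y \<in> acc (Suc (lev x))" "lev y \<le> lev x" "Bl x \<inter> Bl y \<noteq> {}"
        using cover_k[of "Suc (lev x)"] by blast
      then show "\<exists>y\<in>Y. lev y \<le> lev x \<and> Bl x \<inter> Bl y \<noteq> {}" unfolding Y_def by blast
    qed
  qed
qed


lemma ball_sym:
  assumes "m \<ge> 1" "x \<in> X" "z \<in> bowen_ball X f \<alpha> m x \<epsilon>"
  shows "x \<in> bowen_ball X f \<alpha> m z \<epsilon>"
proof -
  have z: "z \<in> X \<and> (\<forall>i<m. exp (\<alpha> * real i) * dist ((f ^^ i) x) ((f ^^ i) z) < \<epsilon>)"
    using assms(3) unfolding ball_iff[OF assms(1)] .
  show ?thesis unfolding ball_iff[OF assms(1)] using assms(2) z by (simp add: dist_commute)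
qed

lemma ball_shorten:
  assumes "1 \<le> m" "m \<le> n" "z \<in> bowen_ball X f \<alpha> n x \<epsilon>"
  shows "z \<in> bowen_ball X f \<alpha> m x \<epsilon>"
proof -
  have "1 \<le> n" using assms by linarith
  then show ?thesis using assms ball_iff[OF assms(1)] ball_iff[of n] by (meson order_less_le_trans)
qed

lemma key1:
  assumes P: "prob_space \<mu>" and S: "sets \<mu> = sets (restrict_space borel X)"
    and fc: "continuous_on X f" and fX: "f ` X \<subseteq> X" and al: "\<alpha> \<ge> 0"
    and cm: "cm > 0" "\<forall>y\<in>X. cm \<le> \<phi> y" and CC: "\<forall>y\<in>X. \<phi> y \<le> C"
    and KX: "K \<subseteq> X" and ep: "\<epsilon> > 0" and s: "s > 0" and dp: "\<delta> > 0" and N: "N \<ge> 1"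
    and hyp: "\<forall>x\<in>K. \<forall>n0. \<exists>n\<ge>n0. exp (- (s + \<delta>) * birkhoff f \<phi> n x) < measure \<mu> (bowen_ball X f \<alpha> n x \<epsilon>)"
  shows "M_n X f \<alpha> K (s + 2 * \<delta>) (2 * \<epsilon>) N \<phi> \<le> ennreal (exp (- (\<delta> * cm)) ^ N)"
proof -
  define t where "t = s + \<delta>"
  have tp: "t > 0" unfolding t_def using s dp by simp
  define lev where "lev x = (SOME n. n \<ge> N \<and> exp (- t * birkhoff f \<phi> n x) < measure \<mu> (bowen_ball X f \<alpha> n x \<epsilon>))" for x
  have levp: "lev x \<ge> N \<and> exp (- t * birkhoff f \<phi> (lev x) x) < measure \<mu> (bowen_ball X f \<alpha> (lev x) x \<epsilon>)"
    if "x \<in> K" for x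
    unfolding lev_def by (rule someI_ex) (use hyp that t_def in blast)
  define Bl where "Bl x = bowen_ball X f \<alpha> (lev x) x \<epsilon>" for x
  define cst where "cst k = exp (- t * (real k * C))" for k :: nat
  have low: "\<forall>x\<in>K. cst (lev x) < measure \<mu> (Bl x)"
  proof
    fix x assume x: "x \<in> K"
    have "birkhoff f \<phi> (lev x) x \<le> real (lev x) * C"
      by (rule birk_upper[OF fX _ CC]) (use x KX in blast)
    then have "- t * (real (lev x) * C) \<le> - t * birkhoff f \<phi> (lev x) x" using tp by simp
    then have "cst (lev x) \<le> exp (- t * birkhoff f \<phi> (lev x) x)" unfolding cst_def by simp
    then show "cst (lev x) < measure \<mu> (Bl x)" using levp[OF x] unfolding Bl_def by linarith
  qed
  have Bm: "\<forall>x\<in>K. Bl x \<in> sets \<mu>" unfolding Bl_def using ball_meas[OF fc fX S] by blast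
  have cstp: "\<forall>k. cst k > 0" unfolding cst_def by simp
  obtain Y where Y: "Y \<subseteq> K" "countable Y" "\<forall>y\<in>Y. \<forall>y'\<in>Y. y \<noteq> y' \<longrightarrow> Bl y \<inter> Bl y' = {}"
      "\<forall>x\<in>K. \<exists>y\<in>Y. lev y \<le> lev x \<and> Bl x \<inter> Bl y \<noteq> {}"
    using select[OF P Bm cstp low] by blast
  define I where "I = to_nat_on Y ` Y"
  define c where "c = from_nat_into Y"
  define m where "m i = lev (c i)" for i
  have cI: "c i \<in> Y" if "i \<in> I" for i
    using that Y(2) unfolding I_def c_def by auto
  have cinv: "c (to_nat_on Y y) = y" if "y \<in> Y" for y
    using that Y(2) unfolding c_def by simp
  have levY: "lev y \<ge> N" if "y \<in> Y" for y using levp that Y(1) by blast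
  have cv: "(I, c, m) \<in> cov X f \<alpha> K (2 * \<epsilon>) N"
    unfolding cov_iff
  proof (intro conjI ballI)
    fix i assume i: "i \<in> I"
    show "c i \<in> X" using cI[OF i] Y(1) KX by blast
    show "N \<le> m i" unfolding m_def using levY[OF cI[OF i]] .
  next
    show "K \<subseteq> (\<Union>i\<in>I. bowen_ball X f \<alpha> (m i) (c i) (2 * \<epsilon>))"
    proof
      fix x assume x: "x \<in> K"
      then obtain y where y: "y \<in> Y" "lev y \<le> lev x" "Bl x \<inter> Bl y \<noteq> {}" using Y(4) by blast
      then obtain z where z: "z \<in> Bl x" "z \<in> Bl y" by blast
      have ly: "lev y \<ge> 1" using levY[OF y(1)] N by linarith
      have xX: "x \<in> X" using x KX by blast
      have yX: "y \<in> X" using y(1) Y(1) KX by blast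
      have "z \<in> bowen_ball X f \<alpha> (lev y) x \<epsilon>"
        by (rule ball_shorten[OF ly y(2)]) (use z(1) Bl_def in simp)
      then have xz: "x \<in> bowen_ball X f \<alpha> (lev y) z \<epsilon>" by (rule ball_sym[OF ly xX])
      have yz: "y \<in> bowen_ball X f \<alpha> (lev y) z \<epsilon>"
        by (rule ball_sym[OF ly yX]) (use z(2) Bl_def in simp)
      have "x \<in> bowen_ball X f \<alpha> (lev y) y (2 * \<epsilon>)" by (rule ball_tri[OF ly yz xz])
      moreover have "to_nat_on Y y \<in> I" unfolding I_def using y(1) by blast
      ultimately show "x \<in> (\<Union>i\<in>I. bowen_ball X f \<alpha> (m i) (c i) (2 * \<epsilon>))"
        unfolding m_def using cinv[OF y(1)] by (metis UN_I)
    qed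
  qed
  define q where "q = exp (- (\<delta> * cm)) ^ N"
  have qnn: "q \<ge> 0" unfolding q_def by simp
  have "M_n X f \<alpha> K (s + 2 * \<delta>) (2 * \<epsilon>) N \<phi> \<le> tm X f \<alpha> (s + 2 * \<delta>) (2 * \<epsilon>) \<phi> (I, c, m)"
    by (rule M_n_le[OF cv])
  also have "\<dots> \<le> (\<integral>\<^sup>+ i. ennreal q * emeasure \<mu> (Bl (c i)) \<partial>count_space I)"
    unfolding tm_def prod.case
  proof (rule nn_integral_mono)
    fix i assume "i \<in> space (count_space I)"
    then have i: "i \<in> I" by simp
    let ?y = "c i"
    have yY: "?y \<in> Y" by (rule cI[OF i])
    have yK: "?y \<in> K" using yY Y(1) by blast
    have yX: "?y \<in> X" using yK KX by blast
    have mN: "m i \<ge> N" unfolding m_def by (rule levY[OF yY])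
    have m1: "m i \<ge> 1" using mN N by linarith
    have e2: "2 * \<epsilon> > 0" using ep by simp
    let ?sp = "SUP z\<in>bowen_ball X f \<alpha> (m i) ?y (2 * \<epsilon>). birkhoff f \<phi> (m i) z"
    have sp1: "birkhoff f \<phi> (m i) ?y \<le> ?sp"
      by (rule sup_ge[OF fX CC ball_center[OF m1 yX e2]])
    have sp2: "real (m i) * cm \<le> ?sp" by (rule sup_lower[OF fX CC cm(2) m1 yX e2])
    have "real N * cm \<le> real (m i) * cm" using mN cm(1) by simp
    then have sp3: "real N * cm \<le> ?sp" using sp2 by linarith
    have "- (s + 2 * \<delta>) * ?sp = - \<delta> * ?sp + (- t * ?sp)" unfolding t_def by (simp add: algebra_simps)
    also have "\<dots> \<le> real N * (- (\<delta> * cm)) + (- t * birkhoff f \<phi> (m i) ?y)"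
    proof (rule add_mono)
      show "- \<delta> * ?sp \<le> real N * (- (\<delta> * cm))" using sp3 dp by (simp add: algebra_simps mult_left_mono)
      show "- t * ?sp \<le> - t * birkhoff f \<phi> (m i) ?y" using sp1 tp by simp
    qed
    finally have "exp (- (s + 2 * \<delta>) * ?sp) \<le> exp (real N * (- (\<delta> * cm))) * exp (- t * birkhoff f \<phi> (m i) ?y)"
      by (simp add: exp_add[symmetric])
    also have "\<dots> = q * exp (- t * birkhoff f \<phi> (m i) ?y)" unfolding q_def exp_of_nat_mult[symmetric] by simp
    also have "\<dots> \<le> q * measure \<mu> (Bl ?y)"
      using levp[OF yK] qnn unfolding m_def Bl_def by (simp add: mult_left_mono less_imp_le)
    finally have le: "exp (- (s + 2 * \<delta>) * ?sp) \<le> q * measure \<mu> (Bl ?y)" .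
    have "ennreal (exp (- (s + 2 * \<delta>) * ?sp)) \<le> ennreal (q * measure \<mu> (Bl ?y))"
      by (rule ennreal_leI[OF le])
    also have "\<dots> = ennreal q * emeasure \<mu> (Bl ?y)"
      using qnn finite_measure.emeasure_eq_measure[OF prob_space.axioms(1)[OF P]]
      by (simp add: ennreal_mult)
    finally show "ennreal (exp (- (s + 2 * \<delta>) * ?sp)) \<le> ennreal q * emeasure \<mu> (Bl (c i))" .
  qed
  also have "\<dots> = ennreal q * (\<integral>\<^sup>+ i. emeasure \<mu> (Bl (c i)) \<partial>count_space I)"
    by (rule nn_integral_cmult) simp
  also have "(\<integral>\<^sup>+ i. emeasure \<mu> (Bl (c i)) \<partial>count_space I) = emeasure \<mu> (\<Union>i\<in>I. Bl (c i))"
  proof (rule emeasure_UN_countable[symmetric])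
    show "\<And>i. i \<in> I \<Longrightarrow> Bl (c i) \<in> sets \<mu>" using Bm cI Y(1) by blast
    show "countable I" by (rule countableI_type)
    show "disjoint_family_on (\<lambda>i. Bl (c i)) I"
      unfolding disjoint_family_on_def
    proof (intro ballI impI)
      fix i j assume ij: "i \<in> I" "j \<in> I" "i \<noteq> j"
      obtain y where y: "y \<in> Y" "i = to_nat_on Y y" using ij(1) unfolding I_def by blast
      obtain y' where y': "y' \<in> Y" "j = to_nat_on Y y'" using ij(2) unfolding I_def by blast
      have "y \<noteq> y'" using ij(3) y y' by blast
      then have "Bl y \<inter> Bl y' = {}" using Y(3) y(1) y'(1) by blast
      then show "Bl (c i) \<inter> Bl (c j) = {}" using cinv y y' by simp
    qed
  qed
  also have "ennreal q * emeasure \<mu> (\<Union>i\<in>I. Bl (c i)) \<le> ennreal q * 1"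
    by (rule mult_left_mono) (simp_all add: prob_space.emeasure_le_1[OF P])
  finally show ?thesis unfolding q_def by simp
qed


lemma step_b:
  assumes P: "prob_space \<mu>" and S: "sets \<mu> = sets (restrict_space borel X)"
    and fc: "continuous_on X f" and fX: "f ` X \<subseteq> X"
    and cm: "cm > 0" "\<forall>y\<in>X. cm \<le> \<phi> y"
    and xX: "x \<in> X" and ep: "\<epsilon> > 0" and t: "local_BK X f \<mu> \<alpha> \<phi> x < ereal t"
  shows "\<forall>n0. \<exists>n\<ge>n0. exp (- t * birkhoff f \<phi> n x) < measure \<mu> (bowen_ball X f \<alpha> n x \<epsilon>)"
proof (rule ccontr)
  assume "\<not> ?thesis"
  then obtain n0 where n0: "\<forall>n\<ge>n0. measure \<mu> (bowen_ball X f \<alpha> n x \<epsilon>) \<le> exp (- t * birkhoff f \<phi> n x)"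
    by (meson not_le)
  have nn: "\<forall>y\<in>X. 0 \<le> \<phi> y" using cm by (meson less_le_trans less_imp_le)
  have "eventually (\<lambda>n. ereal t \<le> (if measure \<mu> (bowen_ball X f \<alpha> n x \<epsilon>) = 0 then \<infinity>
                 else ereal (- ln (measure \<mu> (bowen_ball X f \<alpha> n x \<epsilon>)) / birkhoff f \<phi> n x))) sequentially"
    unfolding eventually_sequentially
  proof (intro exI[of _ "Suc n0"] allI impI)
    fix n assume n: "Suc n0 \<le> n"
    let ?m = "measure \<mu> (bowen_ball X f \<alpha> n x \<epsilon>)"
    show "ereal t \<le> (if ?m = 0 then \<infinity> else ereal (- ln ?m / birkhoff f \<phi> n x))"
    proof (cases "?m = 0")
      case True then show ?thesis by simp
    next
      case False
      have "0 \<le> ?m" by simp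
      then have mp: "?m > 0" using False by linarith
      have Sp: "birkhoff f \<phi> n x > 0"
      proof -
        have "real n * cm \<le> birkhoff f \<phi> n x" by (rule birk_lower[OF fX xX cm(2)])
        moreover have "real n * cm > 0" using n cm(1) by simp
        ultimately show ?thesis by linarith
      qed
      have "?m \<le> exp (- t * birkhoff f \<phi> n x)" using n0 n by simp
      then have "ln ?m \<le> - t * birkhoff f \<phi> n x" using mp by (metis ln_exp ln_le_cancel_iff exp_gt_zero)
      then have "t * birkhoff f \<phi> n x \<le> - ln ?m" by simp
      then have "t \<le> - ln ?m / birkhoff f \<phi> n x" by (metis pos_le_divide_eq[OF Sp])
      then show ?thesis using False by simp
    qed
  qed
  then have "ereal t \<le> hBK X f \<mu> \<alpha> \<phi> x \<epsilon>" unfolding hBK_def by (rule Liminf_bounded)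
  also have "\<dots> \<le> (SUP e\<in>{0<..}. hBK X f \<mu> \<alpha> \<phi> x e)" by (rule SUP_upper) (use ep in simp)
  also have "\<dots> = local_BK X f \<mu> \<alpha> \<phi> x" by (rule local_BK_SUP[OF P S fc fX xX nn, symmetric])
  finally show False using t by simp
qed

lemma part1:
  assumes cX: "compact X" and fc: "continuous_on X f" and fX: "f ` X \<subseteq> X"
    and P: "prob_space \<mu>" and S: "sets \<mu> = sets (restrict_space borel X)"
    and Km: "K \<in> sets \<mu>" and al: "\<alpha> \<ge> 0"
    and phic: "continuous_on X \<phi>" and phip: "\<forall>x\<in>X. \<phi> x > 0" and s: "s > 0"
    and BK: "\<forall>x\<in>K. local_BK X f \<mu> \<alpha> \<phi> x \<le> ereal s"
  shows "dim_BS X f \<alpha> K \<phi> \<le> ereal s"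
proof -
  obtain cm C where cm: "cm > 0" "\<forall>y\<in>X. cm \<le> \<phi> y" and CC: "\<forall>y\<in>X. \<phi> y \<le> C"
    using consts_setup[OF cX phic phip] by blast
  have nn: "\<forall>y\<in>X. 0 \<le> \<phi> y" using phip by (simp add: less_imp_le)
  have KX: "K \<subseteq> X" by (rule K_sub_X[OF S Km])
  have dimeq: "dim_BS X f \<alpha> K \<phi> = (SUP e\<in>{0<..}. M_crit X f \<alpha> K e \<phi>)"
    by (rule dim_BS_SUP[OF fX CC nn])
  show ?thesis unfolding dimeq
  proof (rule SUP_least)
    fix e :: real assume "e \<in> {0<..}"
    then have e: "e > 0" by simp
    show "M_crit X f \<alpha> K e \<phi> \<le> ereal s"
    proof (rule dense_ge_bounded[of "ereal s" "ereal (s + 1)"])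
      show "ereal s < ereal (s + 1)" by simp
    next
      fix w assume w: "ereal s < w" "w < ereal (s + 1)"
      then obtain wr where wr: "w = ereal wr" by (cases w) auto
      with w have wrs: "s < wr" by simp
      define \<delta> where "\<delta> = (wr - s) / 2"
      define \<epsilon> where "\<epsilon> = e / 2"
      have dp: "\<delta> > 0" unfolding \<delta>_def using wrs by simp
      have ep: "\<epsilon> > 0" unfolding \<epsilon>_def using e by simp
      have e2: "2 * \<epsilon> = e" unfolding \<epsilon>_def by simp
      have sw: "s + 2 * \<delta> = wr" unfolding \<delta>_def by (simp add: field_simps)
      have hyp: "\<forall>x\<in>K. \<forall>n0. \<exists>n\<ge>n0. exp (- (s + \<delta>) * birkhoff f \<phi> n x) < measure \<mu> (bowen_ball X f \<alpha> n x \<epsilon>)"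
      proof
        fix x assume x: "x \<in> K"
        show "\<forall>n0. \<exists>n\<ge>n0. exp (- (s + \<delta>) * birkhoff f \<phi> n x) < measure \<mu> (bowen_ball X f \<alpha> n x \<epsilon>)"
        proof (rule step_b[OF P S fc fX cm _ ep])
          show "x \<in> X" using x KX by blast
          have "local_BK X f \<mu> \<alpha> \<phi> x \<le> ereal s" using BK x by blast
          also have "\<dots> < ereal (s + \<delta>)" using dp by simp
          finally show "local_BK X f \<mu> \<alpha> \<phi> x < ereal (s + \<delta>)" .
        qed
      qed
      define q where "q = exp (- (\<delta> * cm))"
      have q: "0 \<le> q" "q < 1" unfolding q_def using dp cm(1) by auto
      have bound: "M_n X f \<alpha> K wr e n \<phi> \<le> ennreal (q ^ n)" if "n \<ge> 1" for n
        using key1[OF P S fc fX al cm CC KX ep s dp that hyp] unfolding sw e2 q_def .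
      have zero: "M_n X f \<alpha> K wr e (Suc n) \<phi> = 0" for n
      proof -
        have lim: "(\<lambda>k. ennreal (q ^ k)) \<longlonglongrightarrow> ennreal 0"
          by (rule tendsto_ennrealI[OF LIMSEQ_realpow_zero[OF q]])
        have "\<forall>k\<ge>Suc n. M_n X f \<alpha> K wr e (Suc n) \<phi> \<le> ennreal (q ^ k)"
        proof (intro allI impI)
          fix k assume k: "Suc n \<le> k"
          have "M_n X f \<alpha> K wr e (Suc n) \<phi> \<le> M_n X f \<alpha> K wr e k \<phi>"
            using M_n_incseq k unfolding incseq_def by blast
          also have "\<dots> \<le> ennreal (q ^ k)" by (rule bound) (use k in simp)
          finally show "M_n X f \<alpha> K wr e (Suc n) \<phi> \<le> ennreal (q ^ k)" .
        qed
        then have "M_n X f \<alpha> K wr e (Suc n) \<phi> \<le> ennreal 0"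
          by (intro LIMSEQ_le_const[OF lim]) blast
        then show ?thesis by simp
      qed
      have "M_s X f \<alpha> K wr e \<phi> = 0" unfolding M_s_SUP zero by simp
      then have "ereal wr \<in> {ereal s |s. M_s X f \<alpha> K s e \<phi> = 0}" by blast
      then show "M_crit X f \<alpha> K e \<phi> \<le> w" unfolding M_crit_def wr by (rule Inf_lower)
    qed
  qed
qed

theorem mainTheorem7:
  fixes X :: "'a::metric_space set" and f :: "'a \<Rightarrow> 'a" and \<mu> :: "'a measure"
    and K :: "'a set" and \<alpha> :: real and \<phi> :: "'a \<Rightarrow> real" and s :: real
  assumes "compact X"
    and "continuous_on X f" and "f ` X \<subseteq> X"
    and "prob_space \<mu>" and "sets \<mu> = sets (restrict_space borel X)"
    and "K \<in> sets \<mu>"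
    and "\<alpha> \<ge> 0"
    and "continuous_on X \<phi>" and "\<forall>x\<in>X. \<phi> x > 0"
    and "s > 0"
  shows "((\<forall>x\<in>K. local_BK X f \<mu> \<alpha> \<phi> x \<le> ereal s) \<longrightarrow> dim_BS X f \<alpha> K \<phi> \<le> ereal s)
       \<and> ((\<forall>x\<in>K. local_BK X f \<mu> \<alpha> \<phi> x \<ge> ereal s) \<and> measure \<mu> K > 0
            \<longrightarrow> dim_BS X f \<alpha> K \<phi> \<ge> ereal s)"
  using part1[OF assms] part2[OF assms] by blast

end
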